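(* Let $\mathbb{F}$ be a field with $\mathrm{char}(\mathbb{F})\neq2$ and let $X$ be a unitary alternative $\mathbb{F}$-algebra with unit $e$. Then the map $\mathrm{Inn}\colon X\to\mathcal{E}(X)$, $x\mapsto(x\cdot-,\,-\cdot x)$, is a bijection (indeed a linear isomorphism compatible with the multiplications). Concretely, every pair $(f*-,-*f)\in\mathcal{E}(X)$ satisfies $f*e=e*f=:\alpha\in X$ and $f*x=\alpha x$, $x*f=x\alpha$ for all $x\in X$, and $\mathrm{Inn}$ has trivial kernel.
   Context: An alternative algebra satisfies $(yx)x=y(xx)$ and $x(xy)=(xx)y$. For an alternative algebra $X$, $\mathcal{E}(X)$ (the external weak actor) is the subspace of all pairs $(f*-,\,-*f)\in\mathrm{End}(X)\times\mathrm{End}(X)$ such that for all $x,y\in X$: $f*(xy)=(x*f)y+(f*x)y-x(f*y)$, $(xy)*f=x(f*y)+x(y*f)-(x*f)y$, $x(y*f)=(yx)*f+(xy)*f-y(x*f)$, $(f*x)y=f*(yx)+f*(xy)-(f*y)x$. It carries the bilinear partial multiplication $\langle(f*-,-*f),(g*-,-*g)\rangle=(h*-,-*h)$ with $h*x=-(f*x)*g+f*(g*x)+f*(x*g)$ and $x*h=(x*f)*g+(f*x)*g-f*(x*g)$, defined whenever the result lies in $\mathcal{E}(X)$. *)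

theory Defs
  imports Complex_Main
begin

definition bilinear_mult :: "('f::field \<Rightarrow> 'x \<Rightarrow> 'x) \<Rightarrow> ('x::ab_group_add \<Rightarrow> 'x \<Rightarrow> 'x) \<Rightarrow> bool" where
  "bilinear_mult sc mul \<longleftrightarrow>
     (\<forall>x y z. mul (x + y) z = mul x z + mul y z) \<and>
     (\<forall>x y z. mul x (y + z) = mul x y + mul x z) \<and>
     (\<forall>a x y. mul (sc a x) y = sc a (mul x y)) \<and>
     (\<forall>a x y. mul x (sc a y) = sc a (mul x y))"

definition alternative_algebra :: "('f::field \<Rightarrow> 'x \<Rightarrow> 'x) \<Rightarrow> ('x::ab_group_add \<Rightarrow> 'x \<Rightarrow> 'x) \<Rightarrow> bool" where
  "alternative_algebra sc mul \<longleftrightarrow>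
     Vector_Spaces.vector_space sc \<and> bilinear_mult sc mul \<and>
     (\<forall>x y. mul (mul y x) x = mul y (mul x x)) \<and>
     (\<forall>x y. mul x (mul x y) = mul (mul x x) y)"

definition unit_elem :: "('x \<Rightarrow> 'x \<Rightarrow> 'x) \<Rightarrow> 'x \<Rightarrow> bool" where
  "unit_elem mul e \<longleftrightarrow> (\<forall>x. mul e x = x \<and> mul x e = x)"

text \<open>The external weak actor: pairs (L, R) = (f*-, -*f) of linear endomorphisms
satisfying the four identities.\<close>

definition ext_weak_actor :: "('f::field \<Rightarrow> 'x \<Rightarrow> 'x) \<Rightarrow> ('x::ab_group_add \<Rightarrow> 'x \<Rightarrow> 'x)
    \<Rightarrow> (('x \<Rightarrow> 'x) \<times> ('x \<Rightarrow> 'x)) set" where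
  "ext_weak_actor sc mul = {(L, R).
     Vector_Spaces.linear sc sc L \<and> Vector_Spaces.linear sc sc R \<and>
     (\<forall>x y. L (mul x y) = mul (R x) y + mul (L x) y - mul x (L y)) \<and>
     (\<forall>x y. R (mul x y) = mul x (L y) + mul x (R y) - mul (R x) y) \<and>
     (\<forall>x y. mul x (R y) = R (mul y x) + R (mul x y) - mul y (R x)) \<and>
     (\<forall>x y. mul (L x) y = L (mul y x) + L (mul x y) - mul (L y) x)}"

text \<open>The (raw) product of two pairs; the partial multiplication on E(X) is this
product, defined whenever the result lies in E(X).\<close>

definition ewa_prod :: "('x::ab_group_add \<Rightarrow> 'x \<Rightarrow> 'x)
    \<Rightarrow> ('x \<Rightarrow> 'x) \<times> ('x \<Rightarrow> 'x) \<Rightarrow> ('x \<Rightarrow> 'x) \<times> ('x \<Rightarrow> 'x) \<Rightarrow> ('x \<Rightarrow> 'x) \<times> ('x \<Rightarrow> 'x)" where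
  "ewa_prod mul P Q =
     ((\<lambda>x. - (snd Q (fst P x)) + fst P (fst Q x) + fst P (snd Q x)),
      (\<lambda>x. snd Q (snd P x) + snd Q (fst P x) - fst P (snd Q x)))"

definition Inn :: "('x \<Rightarrow> 'x \<Rightarrow> 'x) \<Rightarrow> 'x \<Rightarrow> ('x \<Rightarrow> 'x) \<times> ('x \<Rightarrow> 'x)" where
  "Inn mul a = ((\<lambda>x. mul a x), (\<lambda>x. mul x a))"

end

theory Submission
  imports Defs
begin

lemma half_cancel:
  fixes sc :: "'f::field \<Rightarrow> 'x::ab_group_add \<Rightarrow> 'x"
  assumes "(2::'f) \<noteq> 0" "Vector_Spaces.vector_space sc" "v + v = w + (w::'x)"
  shows "v = w"
proof -
  have d: "\<And>u. sc 2 u = u + u"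
    using vector_space.vector_space_assms(2)[OF assms(2), of 1 1] vector_space.vector_space_assms(4)[OF assms(2)]
    by (metis one_add_one)
  have "sc 2 v = sc 2 w" using assms(3) d by simp
  thus ?thesis using vector_space.scale_cancel_left[OF assms(2)] assms(1) by blast
qed

theorem mainTheorem4:
  fixes sc :: "'f::field \<Rightarrow> 'x::ab_group_add \<Rightarrow> 'x"
    and mul :: "'x \<Rightarrow> 'x \<Rightarrow> 'x"
    and e :: 'x
  assumes char: "(2::'f) \<noteq> 0"
    and alt: "alternative_algebra sc mul"
    and unit: "unit_elem mul e"
  shows "bij_betw (Inn mul) UNIV (ext_weak_actor sc mul)
    \<and> (\<forall>a b x. fst (Inn mul (a + b)) x = fst (Inn mul a) x + fst (Inn mul b) x
                 \<and> snd (Inn mul (a + b)) x = snd (Inn mul a) x + snd (Inn mul b) x)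
    \<and> (\<forall>c a x. fst (Inn mul (sc c a)) x = sc c (fst (Inn mul a) x)
                 \<and> snd (Inn mul (sc c a)) x = sc c (snd (Inn mul a) x))
    \<and> (\<forall>a b. ewa_prod mul (Inn mul a) (Inn mul b) = Inn mul (mul a b))
    \<and> (\<forall>P \<in> ext_weak_actor sc mul.
         fst P e = snd P e \<and>
         (\<forall>x. fst P x = mul (fst P e) x \<and> snd P x = mul x (fst P e)))
    \<and> (\<forall>a. Inn mul a = Inn mul 0 \<longrightarrow> a = 0)"
proof -
  have vs: "Vector_Spaces.vector_space sc" using alt by (simp add: alternative_algebra_def)
  have bl: "bilinear_mult sc mul" using alt by (simp add: alternative_algebra_def)
  have da: "\<And>x y z. mul (x + y) z = mul x z + mul y z"
   and db: "\<And>x y z. mul x (y + z) = mul x y + mul x z"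
   and sa: "\<And>a x y. mul (sc a x) y = sc a (mul x y)"
   and sb: "\<And>a x y. mul x (sc a y) = sc a (mul x y)"
    using bl by (auto simp: bilinear_mult_def)
  have ra: "\<And>x y. mul (mul y x) x = mul y (mul x x)"
   and la: "\<And>x y. mul x (mul x y) = mul (mul x x) y"
    using alt by (auto simp: alternative_algebra_def)
  have ue: "\<And>x. mul e x = x" "\<And>x. mul x e = x" using unit by (auto simp: unit_elem_def)
  have LL: "mul x (mul z y) + mul z (mul x y) = mul (mul x z) y + mul (mul z x) y" for x y z
  proof -
    have "mul (x+z) (mul (x+z) y) = mul (mul (x+z) (x+z)) y" by (rule la)
    hence "mul x (mul x y) + mul x (mul z y) + (mul z (mul x y) + mul z (mul z y))
        = mul (mul x x) y + mul (mul x z) y + (mul (mul z x) y + mul (mul z z) y)"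
      by (simp add: da db add_ac)
    thus ?thesis using la[of x y] la[of z y] by (simp add: algebra_simps)
  qed
  have RR: "mul (mul y x) z + mul (mul y z) x = mul y (mul x z) + mul y (mul z x)" for x y z
  proof -
    have "mul (mul y (x+z)) (x+z) = mul y (mul (x+z) (x+z))" by (rule ra)
    hence "mul (mul y x) x + mul (mul y z) x + (mul (mul y x) z + mul (mul y z) z)
        = mul y (mul x x) + mul y (mul z x) + (mul y (mul x z) + mul y (mul z z))"
      by (simp add: da db add_ac)
    thus ?thesis using ra[of y x] ra[of y z] by (simp add: algebra_simps)
  qed
  have m0: "\<And>x. mul 0 x = 0" "\<And>x. mul x 0 = 0"
    using da[of 0 0] db[of _ 0 0] by auto
  have inE: "Inn mul a \<in> ext_weak_actor sc mul" for a
    unfolding ext_weak_actor_def Inn_def mem_Collect_eq case_prod_conv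
  proof (intro conjI allI)
    show "Vector_Spaces.linear sc sc (mul a)" "Vector_Spaces.linear sc sc (\<lambda>x. mul x a)"
      by (auto simp: Vector_Spaces.linear_iff vs da db sa sb)
    fix x y
    show "mul a (mul x y) = mul (mul x a) y + mul (mul a x) y - mul x (mul a y)"
      using LL[where x=a and y=y and z=x] by (simp only: eq_diff_eq add_ac)
    show "mul (mul x y) a = mul x (mul a y) + mul x (mul y a) - mul (mul x a) y"
      using RR[where x=a and y=x and z=y] by (simp only: eq_diff_eq add_ac)
    show "mul x (mul y a) = mul (mul y x) a + mul (mul x y) a - mul y (mul x a)"
      using LL[where x=x and y=a and z=y] by (simp only: eq_diff_eq add_ac)
    show "mul (mul a x) y = mul a (mul y x) + mul a (mul x y) - mul (mul a y) x"
      using RR[where x=x and y=a and z=y] by (simp only: eq_diff_eq add_ac)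
  qed
  have char_P: "fst P e = snd P e \<and> (\<forall>x. fst P x = mul (fst P e) x \<and> snd P x = mul x (fst P e))"
    if P: "P \<in> ext_weak_actor sc mul" for P
  proof -
    obtain L R where PLR: "P = (L, R)" by (cases P)
    have i: "\<And>x y. L (mul x y) = mul (R x) y + mul (L x) y - mul x (L y)"
     and ii: "\<And>x y. R (mul x y) = mul x (L y) + mul x (R y) - mul (R x) y"
      using P unfolding PLR ext_weak_actor_def by blast+
    have eq: "L e = R e" using i[of e e] by (simp only: ue diff_add_cancel add_diff_cancel)
    have Ly: "L y = mul (L e) y" for y
    proof -
      have "L y = mul (L e) y + mul (L e) y - L y" using i[of e y] by (simp only: ue eq)
      hence "L y + L y = mul (L e) y + mul (L e) y" by (simp only: eq_diff_eq add_ac)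
      thus ?thesis by (rule half_cancel[OF char vs])
    qed
    have Rx: "R x = mul x (L e)" for x
    proof -
      have "R x = mul x (L e) + mul x (L e) - R x" using ii[of x e] by (simp only: ue eq)
      hence "R x + R x = mul x (L e) + mul x (L e)" by (simp only: eq_diff_eq add_ac)
      thus ?thesis by (rule half_cancel[OF char vs])
    qed
    show ?thesis unfolding PLR fst_conv snd_conv using eq Ly Rx by blast
  qed
  have inj: "inj (Inn mul)"
  proof (rule injI)
    fix a b assume "Inn mul a = Inn mul b"
    hence "mul a e = mul b e" by (simp add: Inn_def fun_eq_iff)
    thus "a = b" using ue by simp
  qed
  have surj: "Inn mul ` UNIV = ext_weak_actor sc mul"
  proof
    show "Inn mul ` UNIV \<subseteq> ext_weak_actor sc mul" using inE by auto
    show "ext_weak_actor sc mul \<subseteq> Inn mul ` UNIV"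
    proof
      fix P assume P: "P \<in> ext_weak_actor sc mul"
      have "P = Inn mul (fst P e)" unfolding Inn_def
        using char_P[OF P] prod_eqI[of P] by (metis fst_conv snd_conv ext)
      thus "P \<in> Inn mul ` UNIV" by blast
    qed
  qed
  have prod: "ewa_prod mul (Inn mul a) (Inn mul b) = Inn mul (mul a b)" for a b
  proof -
    have "- mul (mul a x) b + mul a (mul b x) + mul a (mul x b) = mul (mul a b) x" for x
      using RR[where x=b and y=a and z=x] by (metis add_diff_cancel add.commute add.assoc diff_conv_add_uminus)
    moreover have "mul (mul x a) b + mul (mul a x) b - mul a (mul x b) = mul x (mul a b)" for x
      using LL[where x=x and y=b and z=a] by (metis diff_eq_eq add.commute)
    ultimately show ?thesis by (simp add: ewa_prod_def Inn_def fun_eq_iff)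
  qed
  have bij: "bij_betw (Inn mul) UNIV (ext_weak_actor sc mul)"
    using inj surj by (simp add: bij_betw_def)
  have k: "\<forall>a. Inn mul a = Inn mul 0 \<longrightarrow> a = 0"
    using inj by (simp add: inj_eq)
  show ?thesis
    apply (intro conjI bij k)
    subgoal by (simp add: Inn_def da db)
    subgoal by (simp add: Inn_def sa sb)
    subgoal using prod by blast
    subgoal using char_P by blast
    done
qed

end
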